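(* For every positive integer $r$, each column of the matrix $S_r$ has exactly $2^{r-1}$ entries equal to $1$, and each row of $S_r$ has exactly $2^r-1$ entries equal to $1$.
   Context: Define $\{0,1\}$-matrices $S_r$ recursively. Let $S_1=I_2$. For $r\ge1$ let $F_r=I_{2^r-1}\otimes\begin{pmatrix}0&1\\1&0\end{pmatrix}$, and let $1_r$, $0_r$ denote the $2^r\times1$ all-ones and all-zeros column vectors. For $r\ge2$ set $S_r=\big(B_r^{(i)}\ B_r^{(ii)}\ B_r^{(iii)}\big)$ (horizontal concatenation) with $$B_r^{(i)}=\begin{pmatrix}1_{r-1}&0_{r-1}\\0_{r-1}&1_{r-1}\end{pmatrix},\quad B_r^{(ii)}=\begin{pmatrix}S_{r-1}\\S_{r-1}\end{pmatrix},\quad B_r^{(iii)}=\begin{pmatrix}S_{r-1}\\S_{r-1}F_{r-1}\end{pmatrix}.$$ Then $S_r$ has $2^r$ rows and $c_r=2^{r+1}-2$ columns. *)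

theory Defs
  imports "Jordan_Normal_Form.Matrix"
begin

definition kron_I :: "nat \<Rightarrow> int mat \<Rightarrow> int mat" where
  "kron_I m A = mat (m * dim_row A) (m * dim_col A)
     (\<lambda>(i,j). if i div dim_row A = j div dim_col A
              then A $$ (i mod dim_row A, j mod dim_col A) else 0)"

definition swap2 :: "int mat" where
  "swap2 = mat 2 2 (\<lambda>(i,j). if i \<noteq> j then 1 else 0)"

definition Fm :: "nat \<Rightarrow> int mat" where
  "Fm r = kron_I (2^r - 1) swap2"

definition hcat :: "int mat \<Rightarrow> int mat \<Rightarrow> int mat" where
  "hcat A B = mat (dim_row A) (dim_col A + dim_col B)
     (\<lambda>(i,j). if j < dim_col A then A $$ (i,j) else B $$ (i, j - dim_col A))"

definition vcat :: "int mat \<Rightarrow> int mat \<Rightarrow> int mat" where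
  "vcat A B = mat (dim_row A + dim_row B) (dim_col A)
     (\<lambda>(i,j). if i < dim_row A then A $$ (i,j) else B $$ (i - dim_row A, j))"

definition ones_col :: "nat \<Rightarrow> int mat" where
  "ones_col r = mat (2^r) 1 (\<lambda>_. 1)"

definition zeros_col :: "nat \<Rightarrow> int mat" where
  "zeros_col r = mat (2^r) 1 (\<lambda>_. 0)"

text \<open>S_r for r >= 1 (S 0 is an irrelevant dummy value).\<close>
fun S :: "nat \<Rightarrow> int mat" where
  "S 0 = 1\<^sub>m 1"
| "S (Suc 0) = 1\<^sub>m 2"
| "S (Suc (Suc n)) =
     (let r' = Suc n;
          B1 = vcat (hcat (ones_col r') (zeros_col r')) (hcat (zeros_col r') (ones_col r'));
          B2 = vcat (S r') (S r');
          B3 = vcat (S r') (S r' * Fm r')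
      in hcat B1 (hcat B2 B3))"

end

theory Submission
  imports Defs
begin

definition pp :: "nat \<Rightarrow> nat" where "pp j = (if even j then Suc j else j - 1)"

lemma pp_lt: "j < 2*m \<Longrightarrow> pp j < 2*m"
  unfolding pp_def by presburger

lemma pp_pp: "pp (pp j) = j"
  unfolding pp_def by presburger

lemma card_Suc_split: fixes m :: nat shows "card {i. i < Suc m \<and> P i} = card {i. i < m \<and> P i} + (if P m then 1 else 0)"
proof -
  have "{i. i < Suc m \<and> P i} = (if P m then insert m {i. i < m \<and> P i} else {i. i < m \<and> P i})"
    by (auto simp: less_Suc_eq)
  then show ?thesis by simp
qed

lemma card_split: fixes a b :: nat shows "card {i. i < a+b \<and> P i} = card {i. i<a \<and> P i} + card {i. i<b \<and> P (a+i)}"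
  by (induction b) (simp_all add: card_Suc_split)

lemma card_perm: "card {j. j < 2*m \<and> P (pp j)} = card {j. j<2*m \<and> P j}"
proof -
  have "{j. j < 2*m \<and> P (pp j)} = pp ` {j. j<2*m \<and> P j}"
  proof (intro equalityI subsetI)
    fix x assume "x \<in> {j. j < 2*m \<and> P (pp j)}"
    then have "pp x \<in> {j. j<2*m \<and> P j}" "x = pp (pp x)" using pp_lt pp_pp by auto
    then show "x \<in> pp ` {j. j<2*m \<and> P j}" by (rule rev_image_eqI[OF _ ])
  next
    fix x assume "x \<in> pp ` {j. j<2*m \<and> P j}"
    then obtain y where "y < 2*m" "P y" "x = pp y" by auto
    then show "x \<in> {j. j < 2*m \<and> P (pp j)}" using pp_lt pp_pp by auto
  qed
  moreover have "inj_on pp {j. j<2*m \<and> P j}"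
    by (metis inj_on_inverseI pp_pp)
  ultimately show ?thesis by (simp add: card_image)
qed

lemma Fm_dims: "dim_row (Fm m) = (2^m-1)*2" "dim_col (Fm m) = (2^m-1)*2"
  by (auto simp: Fm_def kron_I_def swap2_def)

lemma pp_char: "(k div 2 = j div 2 \<and> k mod 2 \<noteq> j mod (2::nat)) \<longleftrightarrow> k = pp j"
proof (cases "even j")
  case True
  then obtain a where j: "j = 2*a" by auto
  show ?thesis
  proof
    assume "k div 2 = j div 2 \<and> k mod 2 \<noteq> j mod 2"
    then have "k div 2 = a" "k mod 2 = 1" using j by auto
    then have "k = 2*a+1" using div_mult_mod_eq[of k 2] by simp
    then show "k = pp j" using True j by (simp add: pp_def)
  next
    assume "k = pp j"
    then have "k = 2*a+1" using True j by (simp add: pp_def)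
    then show "k div 2 = j div 2 \<and> k mod 2 \<noteq> j mod 2" using j by simp
  qed
next
  case False
  then obtain a where j: "j = 2*a+1" using oddE by blast
  show ?thesis
  proof
    assume "k div 2 = j div 2 \<and> k mod 2 \<noteq> j mod 2"
    then have "k div 2 = a" "k mod 2 = 0" using j by auto
    then have "k = 2*a" using div_mult_mod_eq[of k 2] by simp
    then show "k = pp j" using False j by (simp add: pp_def)
  next
    assume "k = pp j"
    then have "k = 2*a" using False j by (simp add: pp_def)
    then show "k div 2 = j div 2 \<and> k mod 2 \<noteq> j mod 2" using j by simp
  qed
qed

lemma Fm_idx: "k < (2^m-1)*2 \<Longrightarrow> j < (2^m-1)*2 \<Longrightarrow> Fm m $$ (k,j) = (if k = pp j then 1 else 0)"
  unfolding Fm_def kron_I_def swap2_def pp_char[symmetric]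
  by auto

lemma mulF: assumes "dim_col A = (2^m-1)*2" "i < dim_row A" "j < (2^m-1)*2"
  shows "(A * Fm m) $$ (i,j) = A $$ (i, pp j)"
proof -
  have "(A * Fm m) $$ (i,j) = (\<Sum>k\<in>{0..<(2^m-1)*2}. A $$ (i,k) * Fm m $$ (k,j))"
    using assms by (simp add: Fm_dims scalar_prod_def)
  also have "\<dots> = (\<Sum>k\<in>{0..<(2^m-1)*2}. if k = pp j then A $$ (i,k) else 0)"
    using assms by (intro sum.cong) (auto simp: Fm_idx)
  also have "\<dots> = A $$ (i, pp j)"
    using assms pp_lt[of j "2^m-1"] by (simp add: mult.commute)
  finally show ?thesis .
qed

lemma hcat_dims[simp]: "dim_row (hcat A B) = dim_row A" "dim_col (hcat A B) = dim_col A + dim_col B"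
  by (auto simp: hcat_def)
lemma vcat_dims[simp]: "dim_row (vcat A B) = dim_row A + dim_row B" "dim_col (vcat A B) = dim_col A"
  by (auto simp: vcat_def)
lemma hcat_idx: "i < dim_row A \<Longrightarrow> j < dim_col A + dim_col B \<Longrightarrow>
  hcat A B $$ (i,j) = (if j < dim_col A then A $$ (i,j) else B $$ (i, j - dim_col A))"
  by (simp add: hcat_def)
lemma vcat_idx: "i < dim_row A + dim_row B \<Longrightarrow> j < dim_col A \<Longrightarrow>
  vcat A B $$ (i,j) = (if i < dim_row A then A $$ (i,j) else B $$ (i - dim_row A, j))"
  by (simp add: vcat_def)

lemma S_SS: "S (Suc (Suc n)) = hcat (vcat (hcat (ones_col (Suc n)) (zeros_col (Suc n))) (hcat (zeros_col (Suc n)) (ones_col (Suc n))))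
   (hcat (vcat (S (Suc n)) (S (Suc n))) (vcat (S (Suc n)) (S (Suc n) * Fm (Suc n))))"
  by (simp only: S.simps(3) Let_def)

context
  fixes n R C
  assumes dA: "dim_row (S (Suc n)) = R" "dim_col (S (Suc n)) = C" and R: "R = 2^Suc n" and CF: "C = (2^Suc n - 1)*2"
begin

lemma dFm: "dim_row (S (Suc n) * Fm (Suc n)) = R" "dim_col (S (Suc n) * Fm (Suc n)) = C" using dA CF by (auto simp: Fm_dims)

lemma E1: "i < 2*R \<Longrightarrow> j < 2 \<Longrightarrow> S (Suc (Suc n)) $$ (i,j) = (if i < R then (if j = 0 then 1 else 0) else (if j = 0 then 0 else 1))"
  unfolding S_SS R by (auto simp: hcat_def vcat_def ones_col_def zeros_col_def dA[unfolded R] dFm[unfolded R])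

lemma E2: "i < 2*R \<Longrightarrow> k < C \<Longrightarrow> S (Suc (Suc n)) $$ (i,2+k) = (if i < R then S (Suc n) $$ (i, k) else S (Suc n) $$ (i-R, k))"
  unfolding S_SS R by (auto simp: hcat_def vcat_def ones_col_def zeros_col_def dA[unfolded R] dFm[unfolded R])

lemma E3: "i < 2*R \<Longrightarrow> k < C \<Longrightarrow> S (Suc (Suc n)) $$ (i,2+(C+k)) = (if i < R then S (Suc n) $$ (i, k) else S (Suc n) $$ (i-R, pp k))"
proof -
  assume a: "i < 2*R" "k < C"
  have m: "(S (Suc n) * Fm (Suc n)) $$ (i-R, k) = S (Suc n) $$ (i-R, pp k)" if "\<not> i < R"
    using mulF[of "S (Suc n)" "Suc n" "i-R" k] dA CF a that by auto
  show ?thesis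
    using a m unfolding S_SS R by (auto simp: hcat_def vcat_def ones_col_def zeros_col_def dA[unfolded R] dFm[unfolded R])
qed
end

lemma aux_arith: "1 \<le> (x::nat) \<Longrightarrow> 2 + ((2*x-1)*2 + (2*x-1)*2) = 2*(4*x-1)"
  by linarith

lemma aux_arith2: "1 \<le> (y::nat) \<Longrightarrow> 1 + ((y-1) + (y-1)) = 2*y-1"
  by linarith

lemma main: "dim_row (S (Suc n)) = 2^Suc n \<and> dim_col (S (Suc n)) = 2*(2^Suc n - 1)
  \<and> (\<forall>j < dim_col (S (Suc n)). card {i. i < dim_row (S (Suc n)) \<and> S (Suc n) $$ (i, j) = 1} = 2^n)
  \<and> (\<forall>i < dim_row (S (Suc n)). card {j. j < dim_col (S (Suc n)) \<and> S (Suc n) $$ (i, j) = 1} = 2^Suc n - 1)"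
proof (induction n)
  case 0
  have a: "{i. i < 2 \<and> (1\<^sub>m 2 :: int mat) $$ (i, j) = 1} = {j}" if "j < 2" for j
    using that by (auto split: if_splits)
  have b: "{j. j < 2 \<and> (1\<^sub>m 2 :: int mat) $$ (i, j) = 1} = {i}" if "i < 2" for i
    using that by (auto split: if_splits)
  show ?case using a b by simp
next
  case (Suc n)
  define A where "A = S (Suc n)"
  define R :: nat where "R = 2^Suc n"
  define C :: nat where "C = (2^Suc n - 1)*2"
  have dA: "dim_row A = R" "dim_col A = C" using Suc.IH by (auto simp: A_def R_def C_def)
  have colA: "\<And>j. j < C \<Longrightarrow> card {i. i < R \<and> A $$ (i, j) = 1} = 2^n"
    using Suc.IH by (auto simp: A_def R_def C_def)
  have rowA: "\<And>i. i < R \<Longrightarrow> card {j. j < C \<and> A $$ (i, j) = 1} = 2^Suc n - 1"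
    using Suc.IH by (auto simp: A_def R_def C_def mult.commute)
  have C2: "C = 2*(2^Suc n - 1)" by (simp add: C_def)
  have R1: "R \<ge> 1" by (simp add: R_def)
  have RR: "R = 2^Suc n" by (simp add: R_def)
  note E1' = E1[OF dA[unfolded A_def] RR C_def]
  note E2' = E2[OF dA[unfolded A_def] RR C_def, folded A_def]
  note E3' = E3[OF dA[unfolded A_def] RR C_def, folded A_def]
  define T where "T = S (Suc (Suc n))"
  have dT: "dim_row T = 2*R" "dim_col T = 2 + (C + C)"
    unfolding T_def S_SS A_def[symmetric] using dA dFm[OF dA[unfolded A_def] RR C_def]
    by (auto simp: ones_col_def zeros_col_def R_def A_def)
  show ?case
  proof (intro conjI allI impI)
    show "dim_row (S (Suc (Suc n))) = 2 ^ Suc (Suc n)" using dT by (simp add: T_def R_def)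
    have p: "(1::nat) \<le> 2^n" by simp
    have "dim_col (S (Suc (Suc n))) = 2 + ((2*2^n - 1)*2 + (2*2^n - 1)*2)" using dT
      by (simp add: T_def C_def)
    also have "\<dots> = 2 * (4 * 2^n - 1)"
      using p by (rule aux_arith)
    also have "\<dots> = 2 * (2 ^ Suc (Suc n) - 1)" by simp
    finally show "dim_col (S (Suc (Suc n))) = 2 * (2 ^ Suc (Suc n) - 1)" .
  next
    fix j assume "j < dim_col (S (Suc (Suc n)))"
    hence j: "j < 2 + (C+C)" using dT by (simp add: T_def)
    have "card {i. i < dim_row (S (Suc (Suc n))) \<and> S (Suc (Suc n)) $$ (i, j) = 1}
       = card {i. i < R + R \<and> T $$ (i, j) = 1}" using dT by (simp add: T_def mult_2)
    also have "\<dots> = card {i. i < R \<and> T $$ (i, j) = 1} + card {i. i < R \<and> T $$ (R+i, j) = 1}"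
      by (rule card_split)
    also have "\<dots> = 2^Suc n"
    proof (cases "j < 2")
      case True
      have e1: "{i. i < R \<and> T $$ (i, j) = 1} = {i. i < R \<and> j = 0}"
        using E1' True by (auto simp: T_def split: if_splits)
      have e2: "{i. i < R \<and> T $$ (R+i, j) = 1} = {i. i < R \<and> j \<noteq> 0}"
        using E1' True by (auto simp: T_def split: if_splits)
      show ?thesis unfolding e1 e2 by (cases "j = 0") (auto simp: R_def)
    next
      case False
      show ?thesis
      proof (cases "j < 2 + C")
        case True
        obtain k where k: "j = 2 + k" "k < C" using False True by (metis add_diff_inverse_nat add_less_cancel_left)
        have e1: "{i. i < R \<and> T $$ (i, j) = 1} = {i. i < R \<and> A $$ (i,k) = 1}"
          using E2' k by (auto simp: T_def)
        have e2: "{i. i < R \<and> T $$ (R+i, j) = 1} = {i. i < R \<and> A $$ (i,k) = 1}"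
          using E2' k by (auto simp: T_def)
        show ?thesis unfolding e1 e2 using colA k by simp
      next
        case F2: False
        obtain k where k: "j = 2 + (C + k)" "k < C" using F2 j
          by (metis add.assoc add_diff_inverse_nat add_less_cancel_left)
        have e1: "{i. i < R \<and> T $$ (i, j) = 1} = {i. i < R \<and> A $$ (i,k) = 1}"
          using E3' k by (auto simp: T_def)
        have e2: "{i. i < R \<and> T $$ (R+i, j) = 1} = {i. i < R \<and> A $$ (i, pp k) = 1}"
          using E3' k by (auto simp: T_def)
        have "pp k < C" using pp_lt[of k "2^Suc n - 1"] k C2 by (simp add: mult.commute)
        then show ?thesis unfolding e1 e2 using colA k by simp
      qed
    qed
    finally show "card {i. i < dim_row (S (Suc (Suc n))) \<and> S (Suc (Suc n)) $$ (i, j) = 1} = 2 ^ Suc n" .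
  next
    fix i assume "i < dim_row (S (Suc (Suc n)))"
    hence i: "i < 2*R" using dT by (simp add: T_def)
    have "card {j. j < dim_col (S (Suc (Suc n))) \<and> S (Suc (Suc n)) $$ (i, j) = 1}
       = card {j. j < 2 + (C + C) \<and> T $$ (i, j) = 1}" using dT by (simp add: T_def)
    also have "\<dots> = card {j. j < 2 \<and> T $$ (i, j) = 1} + (card {j. j < C \<and> T $$ (i, 2+j) = 1}
        + card {j. j < C \<and> T $$ (i, 2+(C+j)) = 1})"
      by (simp only: card_split[of 2] card_split[of C])
    also have "\<dots> = 1 + ((2^Suc n - 1) + (2^Suc n - 1))"
    proof -
      have e1: "{j. j < 2 \<and> T $$ (i, j) = 1} = {if i < R then 0 else 1}"
        using E1' i by (auto simp: T_def split: if_splits)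
      have e2: "{j. j < C \<and> T $$ (i, 2+j) = 1} = {j. j < C \<and> A $$ (if i < R then i else i - R, j) = 1}"
        using E2' i by (auto simp: T_def)
      have e3: "{j. j < C \<and> T $$ (i, 2+(C+j)) = 1} = {j. j < C \<and> (if i < R then A $$ (i, j) = 1 else A $$ (i-R, pp j) = 1)}"
        using E3' i by (auto simp: T_def)
      show ?thesis
      proof (cases "i < R")
        case True then show ?thesis unfolding e1 e2 e3 using rowA by simp
      next
        case False
        have "card {j. j < C \<and> A $$ (i-R, pp j) = 1} = 2^Suc n - 1"
          using card_perm[of "2^Suc n - 1" "\<lambda>j. A $$ (i-R, j) = 1"] rowA[of "i-R"] i False C2
          by simp
        then show ?thesis unfolding e1 e2 e3 using rowA[of "i-R"] i False by simp
      qed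
    qed
    also have "\<dots> = 2 * 2 ^ Suc n - 1"
      by (rule aux_arith2) simp
    also have "\<dots> = 2 ^ Suc (Suc n) - 1"
      by (simp only: power_Suc[of 2 "Suc n"])
    finally show "card {j. j < dim_col (S (Suc (Suc n))) \<and> S (Suc (Suc n)) $$ (i, j) = 1} = 2 ^ Suc (Suc n) - 1" .
  qed
qed

theorem lemma4p2:
  fixes r :: nat
  assumes "r \<ge> 1"
  shows "(\<forall>j < dim_col (S r). card {i. i < dim_row (S r) \<and> S r $$ (i, j) = 1} = 2^(r-1))
       \<and> (\<forall>i < dim_row (S r). card {j. j < dim_col (S r) \<and> S r $$ (i, j) = 1} = 2^r - 1)"
proof -
  obtain n where "r = Suc n" using assms by (cases r) auto
  then show ?thesis unfolding \<open>r = Suc n\<close> diff_Suc_1 using main[of n] by blast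
qed

end
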